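(* Let $\mathcal C\subseteq2^{[n]}$ be a stable hyperplane code. Then $\mathcal C$ has no sphere link obstructions: there is no non-maximal face $F$ of the polar complex $\Gamma(\mathcal C)$ such that $\operatorname{link}_F\Gamma(\mathcal C)$ is neither collapsible nor equal to $\Gamma(2^{[n]\setminus\underline F})$.
   Context: A code is a subset $\mathcal C\subseteq 2^{[n]}$. An oriented affine hyperplane in $\mathbb R^d$ is $H=\{x: w\cdot x-h=0\}$ with $w\neq0$, and $H^{+}=\{w\cdot x-h>0\}$, $H^-=\{w\cdot x-h<0\}$. For hyperplanes $\mathcal H=\{H_1,\dots,H_n\}$ and open convex $X\subseteq\mathbb R^d$, the atom of $\sigma\subseteq[n]$ is $A_\sigma=\bigl(\bigcap_{i\in\sigma}(H_i^+\cap X)\bigr)\setminus\bigcup_{j\notin\sigma}H_j^+$ ($A_\emptyset=X\setminus\bigcup_iH_i^+$), and $\mathrm{code}(\mathcal H,X)=\{\sigma:A_\sigma\neq\emptyset\}$. $(\mathcal H,X)$ is stable if $X$ is open convex and whenever $X\cap\bigcap_{i\in\sigma}H_i\ne\emptyset$, $\dim\bigcap_{i\in\sigma}H_i=d-|\sigma|$. A stable hyperplane code is $\mathrm{code}(\mathcal H,X)$ for a stable pair. Polar complex: on vertex set $[n]\sqcup\overline{[n]}$, $\overline{[n]}=\{\bar1,\dots,\bar n\}$, let $\Sigma(\sigma)=\sigma\sqcup\{\bar i:i\in[n]\setminus\sigma\}$ and $\Gamma(\mathcal C)$ be the simplicial complex of all subsets of the sets $\Sigma(\sigma)$, $\sigma\in\mathcal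 C$. For a face $F$ write $F=F^+\sqcup\{\bar j:j\in F^-\}$ with $F^\pm\subseteq[n]$; its support is $\underline F=F^+\cup F^-$. For $S\subseteq[n]$, $\Gamma(2^S)$ is the simplicial complex on $S\sqcup\{\bar i:i\in S\}$ whose faces are all subsets containing no pair $\{i,\bar i\}$ (for $S=\emptyset$ it is $\{\emptyset\}$). $\operatorname{link}_F\Delta=\{\nu\in\Delta:\nu\cap F=\emptyset,\nu\cup F\in\Delta\}$. A free pair in $\Delta$ is $(\sigma,\tau)$ with $\tau$ a facet, $\sigma\subsetneq\tau$, $\sigma$ in no other facet; collapsing along $\sigma$ gives $\{\nu\in\Delta:\nu\not\supseteq\sigma\}$; $\Delta$ is collapsible if finitely many collapses yield the void complex $\{\}$ (so $\{\}$ is collapsible, $\{\emptyset\}$ is not). *)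

theory Defs
  imports "HOL-Analysis.Analysis"
begin

definition hyp :: "(nat \<Rightarrow> 'a::euclidean_space) \<Rightarrow> (nat \<Rightarrow> real) \<Rightarrow> nat \<Rightarrow> 'a set" where
  "hyp w h i = {x. w i \<bullet> x - h i = 0}"

definition hyp_pos :: "(nat \<Rightarrow> 'a::euclidean_space) \<Rightarrow> (nat \<Rightarrow> real) \<Rightarrow> nat \<Rightarrow> 'a set" where
  "hyp_pos w h i = {x. w i \<bullet> x - h i > 0}"

definition atom :: "nat \<Rightarrow> (nat \<Rightarrow> 'a::euclidean_space) \<Rightarrow> (nat \<Rightarrow> real) \<Rightarrow> 'a set \<Rightarrow> nat set \<Rightarrow> 'a set" where
  "atom n w h X \<sigma> = {x \<in> X. (\<forall>i\<in>\<sigma>. x \<in> hyp_pos w h i) \<and> (\<forall>j\<in>{1..n} - \<sigma>. x \<notin> hyp_pos w h j)}"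

definition hcode :: "nat \<Rightarrow> (nat \<Rightarrow> 'a::euclidean_space) \<Rightarrow> (nat \<Rightarrow> real) \<Rightarrow> 'a set \<Rightarrow> nat set set" where
  "hcode n w h X = {\<sigma>. \<sigma> \<subseteq> {1..n} \<and> atom n w h X \<sigma> \<noteq> {}}"

definition stable_pair :: "nat \<Rightarrow> (nat \<Rightarrow> 'a::euclidean_space) \<Rightarrow> (nat \<Rightarrow> real) \<Rightarrow> 'a set \<Rightarrow> bool" where
  "stable_pair n w h X \<longleftrightarrow>
     (\<forall>i\<in>{1..n}. w i \<noteq> 0) \<and> open X \<and> convex X \<and>
     (\<forall>\<sigma>. \<sigma> \<subseteq> {1..n} \<longrightarrow> X \<inter> (\<Inter>i\<in>\<sigma>. hyp w h i) \<noteq> {} \<longrightarrow>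
        aff_dim (\<Inter>i\<in>\<sigma>. hyp w h i) = int DIM('a) - int (card \<sigma>))"

datatype pvert = Pos nat | Neg nat   (* Pos i = i, Neg i = \bar i *)

definition Sig :: "nat \<Rightarrow> nat set \<Rightarrow> pvert set" where
  "Sig n \<sigma> = Pos ` \<sigma> \<union> Neg ` ({1..n} - \<sigma>)"

definition polar_complex :: "nat \<Rightarrow> nat set set \<Rightarrow> pvert set set" where
  "polar_complex n C = {F. \<exists>\<sigma>\<in>C. F \<subseteq> Sig n \<sigma>}"

definition pos_part :: "pvert set \<Rightarrow> nat set" where
  "pos_part F = {i. Pos i \<in> F}"

definition neg_part :: "pvert set \<Rightarrow> nat set" where
  "neg_part F = {i. Neg i \<in> F}"

definition supp :: "pvert set \<Rightarrow> nat set" where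
  "supp F = pos_part F \<union> neg_part F"

text \<open>Gamma(2^S): all subsets of S \<union> bar S containing no pair {i, bar i}.\<close>
definition full_polar :: "nat set \<Rightarrow> pvert set set" where
  "full_polar S = {G. G \<subseteq> Pos ` S \<union> Neg ` S \<and> \<not> (\<exists>i. Pos i \<in> G \<and> Neg i \<in> G)}"

definition link :: "'v set \<Rightarrow> 'v set set \<Rightarrow> 'v set set" where
  "link F \<Delta> = {\<nu> \<in> \<Delta>. \<nu> \<inter> F = {} \<and> \<nu> \<union> F \<in> \<Delta>}"

definition facet :: "'v set set \<Rightarrow> 'v set \<Rightarrow> bool" where
  "facet \<Delta> \<tau> \<longleftrightarrow> \<tau> \<in> \<Delta> \<and> (\<forall>\<nu>\<in>\<Delta>. \<tau> \<subseteq> \<nu> \<longrightarrow> \<nu> = \<tau>)"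

definition free_pair :: "'v set set \<Rightarrow> 'v set \<Rightarrow> 'v set \<Rightarrow> bool" where
  "free_pair \<Delta> \<sigma> \<tau> \<longleftrightarrow> facet \<Delta> \<tau> \<and> \<sigma> \<subset> \<tau> \<and>
     (\<forall>\<tau>'. facet \<Delta> \<tau>' \<and> \<sigma> \<subseteq> \<tau>' \<longrightarrow> \<tau>' = \<tau>)"

definition collapse :: "'v set set \<Rightarrow> 'v set \<Rightarrow> 'v set set" where
  "collapse \<Delta> \<sigma> = {\<nu> \<in> \<Delta>. \<not> \<sigma> \<subseteq> \<nu>}"

inductive collapsible :: "'v set set \<Rightarrow> bool" where
  void: "collapsible {}"
| step: "free_pair \<Delta> \<sigma> \<tau> \<Longrightarrow> collapsible (collapse \<Delta> \<sigma>) \<Longrightarrow> collapsible \<Delta>"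

end

theory Submission
  imports Defs
begin


definition lin :: "(nat \<Rightarrow> 'a::euclidean_space) \<Rightarrow> (nat \<Rightarrow> real) \<Rightarrow> pvert \<Rightarrow> 'a \<Rightarrow> real" where
  "lin w h v x = (case v of Pos i \<Rightarrow> w i \<bullet> x - h i | Neg i \<Rightarrow> h i - w i \<bullet> x)"

definition reg :: "(nat \<Rightarrow> 'a::euclidean_space) \<Rightarrow> (nat \<Rightarrow> real) \<Rightarrow> 'a set \<Rightarrow> pvert set \<Rightarrow> 'a set" where
  "reg w h X G = {x\<in>X. \<forall>v\<in>G. 0 < lin w h v x}"

definition nerve :: "(nat \<Rightarrow> 'a::euclidean_space) \<Rightarrow> (nat \<Rightarrow> real) \<Rightarrow> 'a set \<Rightarrow> nat set \<Rightarrow> pvert set set" where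
  "nerve w h X S = {G. G \<subseteq> Pos ` S \<union> Neg ` S \<and> reg w h X G \<noteq> {}}"

definition stab :: "(nat \<Rightarrow> 'a::euclidean_space) \<Rightarrow> (nat \<Rightarrow> real) \<Rightarrow> 'a set \<Rightarrow> nat set \<Rightarrow> bool" where
  "stab w h X S \<longleftrightarrow> (\<forall>i\<in>S. w i \<noteq> 0) \<and>
     (\<forall>\<sigma>. \<sigma> \<subseteq> S \<longrightarrow> X \<inter> (\<Inter>i\<in>\<sigma>. hyp w h i) \<noteq> {} \<longrightarrow>
        aff_dim (\<Inter>i\<in>\<sigma>. hyp w h i) = int DIM('a) - int (card \<sigma>))"

lemma lin_set: "{x. 0 < lin w h v x} = (case v of Pos i \<Rightarrow> {x. w i \<bullet> x > h i} | Neg i \<Rightarrow> {x. w i \<bullet> x < h i})"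
  by (cases v) (auto simp: lin_def)

lemma reg_eq: "reg w h X G = X \<inter> (\<Inter>v\<in>G. {x. 0 < lin w h v x})"
  by (auto simp: reg_def)

lemma open_reg: "open X \<Longrightarrow> finite G \<Longrightarrow> open (reg w h X G)"
  unfolding reg_eq
  apply (intro open_Int open_INT, simp, simp)
  apply (auto simp: lin_set split: pvert.splits intro: open_halfspace_gt open_halfspace_lt)
  done

lemma convex_reg: "convex X \<Longrightarrow> convex (reg w h X G)"
  unfolding reg_eq
  apply (intro convex_Int convex_INT, simp)
  apply (auto simp: lin_set split: pvert.splits intro: convex_halfspace_gt convex_halfspace_lt)
  done

lemma reg_reg: "reg w h (reg w h X F) G = reg w h X (F \<union> G)"
  by (auto simp: reg_def)

lemma reg_sub: "reg w h X G \<subseteq> X" by (auto simp: reg_def)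

lemma reg_anti: "F \<subseteq> G \<Longrightarrow> reg w h X G \<subseteq> reg w h X F" by (auto simp: reg_def)

lemma nerve_full: "nerve w h X S \<subseteq> full_polar S"
proof
  fix G assume "G \<in> nerve w h X S"
  then obtain x where G: "G \<subseteq> Pos ` S \<union> Neg ` S" and x: "\<forall>v\<in>G. 0 < lin w h v x"
    by (auto simp: nerve_def reg_def)
  have "\<not> (Pos i \<in> G \<and> Neg i \<in> G)" for i
    using x[rule_format, of "Pos i"] x[rule_format, of "Neg i"] by (auto simp: lin_def)
  then show "G \<in> full_polar S" using G by (auto simp: full_polar_def)
qed

lemma sign_vec:
  assumes st: "stab w h X S" and fin: "finite \<sigma>" and sub: "\<sigma> \<subseteq> S" and pX: "p \<in> X"
    and ph: "\<forall>i\<in>\<sigma>. w i \<bullet> p = h i"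
  shows "\<exists>v. \<forall>j\<in>\<sigma>. w j \<bullet> v = e j"
proof -
  have I: "p \<in> (\<Inter>i\<in>\<tau>. hyp w h i)" if "\<tau> \<subseteq> \<sigma>" for \<tau>
    using ph that by (auto simp: hyp_def)
  have D: "aff_dim (\<Inter>i\<in>\<tau>. hyp w h i) = int DIM('a) - int (card \<tau>)" if "\<tau> \<subseteq> \<sigma>" for \<tau>
  proof -
    have "X \<inter> (\<Inter>i\<in>\<tau>. hyp w h i) \<noteq> {}" using I[OF that] pX by blast
    then show ?thesis using st that sub unfolding stab_def by blast
  qed
  have u: "\<exists>u. w i \<bullet> u = 1 \<and> (\<forall>j\<in>\<sigma>-{i}. w j \<bullet> u = 0)" if i: "i\<in>\<sigma>" for i
  proof -
    let ?A = "\<Inter>j\<in>\<sigma>-{i}. hyp w h j" let ?B = "\<Inter>j\<in>\<sigma>. hyp w h j"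
    have dA: "aff_dim ?A = int DIM('a) - int (card (\<sigma>-{i}))" by (rule D) auto
    have dB: "aff_dim ?B = int DIM('a) - int (card \<sigma>)" by (rule D) auto
    have c: "card (\<sigma>-{i}) + 1 = card \<sigma>" using fin i by (metis Suc_eq_plus1 card_Diff1_less card_Suc_Diff1 nat_less_le)
    have "?A \<noteq> ?B" using dA dB c by auto
    moreover have "?B \<subseteq> ?A" by auto
    ultimately obtain q where qA: "q \<in> ?A" and qB: "q \<notin> ?B" by blast
    have qi: "w i \<bullet> q \<noteq> h i"
    proof
      assume "w i \<bullet> q = h i"
      then have "q \<in> hyp w h i" by (simp add: hyp_def)
      with qA have "q \<in> ?B" by auto
      with qB show False by simp
    qed
    define c where "c = w i \<bullet> q - h i"
    have c0: "c \<noteq> 0" using qi by (simp add: c_def)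
    show ?thesis
    proof (intro exI conjI ballI)
      show "w i \<bullet> ((1/c) *\<^sub>R (q - p)) = 1" using c0 ph i by (simp add: inner_diff_right c_def)
      fix j assume j: "j \<in> \<sigma> - {i}"
      then have "w j \<bullet> q = h j" using qA by (auto simp: hyp_def)
      then show "w j \<bullet> ((1/c) *\<^sub>R (q - p)) = 0" using ph j by (simp add: inner_diff_right)
    qed
  qed
  then obtain u where u: "\<And>i. i\<in>\<sigma> \<Longrightarrow> w i \<bullet> u i = 1 \<and> (\<forall>j\<in>\<sigma>-{i}. w j \<bullet> u i = 0)" by metis
  show ?thesis
  proof (intro exI ballI)
    fix j assume j: "j \<in> \<sigma>"
    have "w j \<bullet> (\<Sum>i\<in>\<sigma>. e i *\<^sub>R u i) = (\<Sum>i\<in>\<sigma>. e i * (w j \<bullet> u i))"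
      by (simp add: inner_sum_right)
    also have "\<dots> = e j * (w j \<bullet> u j) + (\<Sum>i\<in>\<sigma>-{j}. e i * (w j \<bullet> u i))"
      using fin j by (simp add: sum.remove)
    also have "(\<Sum>i\<in>\<sigma>-{j}. e i * (w j \<bullet> u i)) = 0"
      using u j by (intro sum.neutral) auto
    finally show "w j \<bullet> (\<Sum>i\<in>\<sigma>. e i *\<^sub>R u i) = e j" using u[OF j] by simp
  qed
qed

lemma small_step:
  fixes p v :: "'a::real_normed_vector"
  assumes "open U" "p \<in> U" shows "\<exists>t>0. p + t *\<^sub>R v \<in> U"
proof -
  obtain r where r: "r > 0" "ball p r \<subseteq> U" using assms open_contains_ball by blast
  define t where "t = r / (2 * (norm v + 1))"
  have "2 * (norm v + 1) > (0::real)" using norm_ge_zero[of v] by (simp add: add_nonneg_pos)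
  then have t0: "t > 0" using r(1) unfolding t_def by (simp add: divide_pos_pos)
  have "norm (t *\<^sub>R v) = t * norm v" using t0 by simp
  also have "\<dots> < r"
  proof -
    have "t * norm v \<le> t * (norm v + 1)" using t0 by simp
    also have "\<dots> = r / 2" unfolding t_def using \<open>2 * (norm v + 1) > (0::real)\<close>
      by (simp add: field_simps)
    finally show ?thesis using r by linarith
  qed
  finally have "p + t *\<^sub>R v \<in> ball p r" by (simp add: dist_norm)
  then show ?thesis using r t0 by blast
qed

lemma ball_full:
  assumes op: "open X" and fin: "finite S" and st: "stab w h X S" and pX: "p \<in> X"
    and ph: "\<forall>i\<in>S. w i \<bullet> p = h i"
  shows "nerve w h X S = full_polar S"
proof
  show "nerve w h X S \<subseteq> full_polar S" by (rule nerve_full)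
  show "full_polar S \<subseteq> nerve w h X S"
  proof
    fix G assume G: "G \<in> full_polar S"
    define e where "e j = (if Pos j \<in> G then 1 else -1::real)" for j
    obtain v where v: "\<forall>j\<in>S. w j \<bullet> v = e j" using sign_vec[OF st fin order_refl pX ph] by blast
    obtain t where t: "t > 0" "p + t *\<^sub>R v \<in> X" using small_step[OF op pX] by blast
    have "p + t *\<^sub>R v \<in> reg w h X G"
      unfolding reg_def
    proof (intro CollectI conjI ballI t)
      fix u assume u: "u \<in> G"
      show "0 < lin w h u (p + t *\<^sub>R v)"
      proof (cases u)
        case (Pos i)
        then have "i \<in> S" using G u by (auto simp: full_polar_def)
        then show ?thesis using Pos u v ph t by (simp add: lin_def inner_add_right e_def)
      next
        case (Neg i)
        then have "i \<in> S" "Pos i \<notin> G" using G u by (auto simp: full_polar_def)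
        then show ?thesis using Neg u v ph t by (simp add: lin_def inner_add_right e_def)
      qed
    qed
    then show "G \<in> nerve w h X S" using G by (auto simp: nerve_def full_polar_def)
  qed
qed



lemma lift_coll:
  assumes "collapsible B"
  shows "\<forall>\<rho>\<in>B. a \<notin> \<rho> \<Longrightarrow> \<forall>\<nu>\<in>Y. a \<notin> \<nu> \<Longrightarrow> collapsible Y \<Longrightarrow> collapsible (Y \<union> insert a ` B)"
  using assms
proof (induction B rule: collapsible.induct)
  case void
  then show ?case by simp
next
  case (step B \<sigma> \<tau>)
  have fp: "facet B \<tau>" "\<sigma> \<subset> \<tau>" "\<And>\<tau>'. facet B \<tau>' \<Longrightarrow> \<sigma> \<subseteq> \<tau>' \<Longrightarrow> \<tau>' = \<tau>"
    using step.hyps(1) by (auto simp: free_pair_def)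
  have tB: "\<tau> \<in> B" using fp(1) by (simp add: facet_def)
  have at: "a \<notin> \<tau>" using tB step.prems by auto
  have as: "a \<notin> \<sigma>" using at fp(2) by auto
  let ?K = "Y \<union> insert a ` B"
  have IH: "collapsible (Y \<union> insert a ` collapse B \<sigma>)"
    using step.IH step.prems by (auto simp: collapse_def)
  have facK: "facet ?K (insert a \<tau>)"
    unfolding facet_def
  proof (intro conjI ballI impI)
    show "insert a \<tau> \<in> ?K" using tB by auto
    fix \<nu> assume \<nu>: "\<nu> \<in> ?K" "insert a \<tau> \<subseteq> \<nu>"
    then obtain \<rho> where \<rho>: "\<rho> \<in> B" "\<nu> = insert a \<rho>" using step.prems by auto
    then have "a \<notin> \<rho>" using step.prems by auto
    then have "\<tau> \<subseteq> \<rho>" using \<nu>(2) \<rho>(2) at by auto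
    then have "\<rho> = \<tau>" using fp(1) \<rho>(1) by (auto simp: facet_def)
    then show "\<nu> = insert a \<tau>" using \<rho> by simp
  qed
  have uniq: "\<tau>' = insert a \<tau>" if t': "facet ?K \<tau>'" "insert a \<sigma> \<subseteq> \<tau>'" for \<tau>'
  proof -
    have "\<tau>' \<in> ?K" using t'(1) by (simp add: facet_def)
    then obtain \<rho> where \<rho>: "\<rho> \<in> B" "\<tau>' = insert a \<rho>" using step.prems t'(2) by auto
    have ar: "a \<notin> \<rho>" using \<rho> step.prems by auto
    have "facet B \<rho>"
      unfolding facet_def
    proof (intro conjI ballI impI)
      show "\<rho> \<in> B" by fact
      fix \<rho>' assume "\<rho>' \<in> B" "\<rho> \<subseteq> \<rho>'"
      then have "insert a \<rho>' \<in> ?K" "\<tau>' \<subseteq> insert a \<rho>'" using \<rho> by auto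
      then have "insert a \<rho>' = \<tau>'" using t'(1) by (simp add: facet_def)
      moreover have "a \<notin> \<rho>'" using \<open>\<rho>' \<in> B\<close> step.prems by auto
      ultimately show "\<rho>' = \<rho>" using \<rho>(2) ar by (metis insert_ident)
    qed
    moreover have "\<sigma> \<subseteq> \<rho>" using t'(2) \<rho>(2) as by auto
    ultimately have "\<rho> = \<tau>" using fp(3) by blast
    then show ?thesis using \<rho> by simp
  qed
  have fpK: "free_pair ?K (insert a \<sigma>) (insert a \<tau>)"
    unfolding free_pair_def
  proof (intro conjI allI impI)
    show "facet ?K (insert a \<tau>)" by (rule facK)
    show "insert a \<sigma> \<subset> insert a \<tau>" using fp(2) as at by (auto simp: psubset_eq)
    fix \<tau>' assume "facet ?K \<tau>' \<and> insert a \<sigma> \<subseteq> \<tau>'"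
    then show "\<tau>' = insert a \<tau>" using uniq by blast
  qed
  have colK: "collapse ?K (insert a \<sigma>) = Y \<union> insert a ` collapse B \<sigma>"
  proof -
    have 1: "\<not> insert a \<sigma> \<subseteq> \<nu>" if "\<nu> \<in> Y" for \<nu> using that step.prems by auto
    have 2: "(insert a \<sigma> \<subseteq> insert a \<rho>) = (\<sigma> \<subseteq> \<rho>)" if "\<rho> \<in> B" for \<rho>
      using that step.prems as by auto
    show ?thesis unfolding collapse_def using 1 2 by auto
  qed
  show ?case using fpK IH colK collapsible.step by metis
qed

lemma cone_coll:
  assumes "finite D" shows "\<forall>\<rho>\<in>D. a \<notin> \<rho> \<Longrightarrow> collapsible (D \<union> insert a ` D)"
  using assms
proof (induction D rule: finite_psubset_induct)
  case (psubset D)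
  show ?case
  proof (cases "D = {}")
    case True
    then show ?thesis by (simp add: collapsible.void)
  next
    case False
    obtain \<rho> where \<rho>: "\<rho> \<in> D" "\<forall>b\<in>D. \<rho> \<subseteq> b \<longrightarrow> \<rho> = b"
      using finite_has_maximal[OF psubset.hyps(1) False] by auto
    have ar: "a \<notin> \<rho>" using \<rho> psubset.prems by auto
    let ?K = "D \<union> insert a ` D"
    have facK: "facet ?K (insert a \<rho>)"
      unfolding facet_def
    proof (intro conjI ballI impI)
      show "insert a \<rho> \<in> ?K" using \<rho> by auto
      fix \<nu> assume \<nu>: "\<nu> \<in> ?K" "insert a \<rho> \<subseteq> \<nu>"
      then obtain \<rho>' where r': "\<rho>' \<in> D" "\<nu> = insert a \<rho>'" using psubset.prems by auto
      then have "\<rho> \<subseteq> \<rho>'" using \<nu>(2) ar psubset.prems by auto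
      then show "\<nu> = insert a \<rho>" using \<rho> r' by auto
    qed
    have uniq: "\<tau>' = insert a \<rho>" if t': "facet ?K \<tau>'" "\<rho> \<subseteq> \<tau>'" for \<tau>'
    proof -
      have "\<tau>' \<in> ?K" using t'(1) by (simp add: facet_def)
      then consider "\<tau>' \<in> D" | \<rho>' where "\<rho>' \<in> D" "\<tau>' = insert a \<rho>'" by auto
      then show ?thesis
      proof cases
        case 1
        then have "\<tau>' = \<rho>" using \<rho> t'(2) by auto
        moreover have "insert a \<rho> \<in> ?K" using \<rho> by auto
        ultimately have "insert a \<rho> = \<rho>" using t'(1) unfolding facet_def by blast
        then show ?thesis using ar by auto
      next
        case 2
        then have "\<rho> \<subseteq> \<rho>'" using t'(2) ar by auto
        then show ?thesis using \<rho> 2 by auto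
      qed
    qed
    have fpK: "free_pair ?K \<rho> (insert a \<rho>)"
      unfolding free_pair_def
    proof (intro conjI allI impI)
      show "facet ?K (insert a \<rho>)" by (rule facK)
      show "\<rho> \<subset> insert a \<rho>" using ar by blast
      fix \<tau>' assume "facet ?K \<tau>' \<and> \<rho> \<subseteq> \<tau>'"
      then show "\<tau>' = insert a \<rho>" using uniq by blast
    qed
    have colK: "collapse ?K \<rho> = (D - {\<rho>}) \<union> insert a ` (D - {\<rho>})"
    proof -
      have 1: "(\<rho> \<subseteq> \<nu>) = (\<nu> = \<rho>)" if "\<nu> \<in> D" for \<nu> using that \<rho> by auto
      have 2: "(\<rho> \<subseteq> insert a \<nu>) = (\<nu> = \<rho>)" if "\<nu> \<in> D" for \<nu> using that \<rho> ar by auto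
      show ?thesis unfolding collapse_def using 1 2 by auto
    qed
    have "collapsible ((D - {\<rho>}) \<union> insert a ` (D - {\<rho>}))"
      using psubset.IH[of "D - {\<rho>}"] \<rho>(1) psubset.prems by auto
    then show ?thesis using fpK colK collapsible.step by metis
  qed
qed



lemma stab_mono: "stab w h X S \<Longrightarrow> S' \<subseteq> S \<Longrightarrow> Y \<subseteq> X \<Longrightarrow> stab w h Y S'"
  unfolding stab_def
proof (elim conjE, intro conjI allI impI ballI)
  assume a: "\<forall>i\<in>S. w i \<noteq> 0" "S' \<subseteq> S"
  fix i assume "i \<in> S'" then show "w i \<noteq> 0" using a by blast
next
  fix \<sigma> assume a: "\<forall>\<sigma>\<subseteq>S. X \<inter> \<Inter> (hyp w h ` \<sigma>) \<noteq> {} \<longrightarrow>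
            aff_dim (\<Inter> (hyp w h ` \<sigma>)) = int DIM('a) - int (card \<sigma>)" "S' \<subseteq> S" "Y \<subseteq> X"
    "\<sigma> \<subseteq> S'" "Y \<inter> \<Inter> (hyp w h ` \<sigma>) \<noteq> {}"
  then have "\<sigma> \<subseteq> S" "X \<inter> \<Inter> (hyp w h ` \<sigma>) \<noteq> {}" by blast+
  then show "aff_dim (\<Inter> (hyp w h ` \<sigma>)) = int DIM('a) - int (card \<sigma>)" using a(1) by blast
qed

lemma nerve_finite: "finite S \<Longrightarrow> finite (nerve w h X S)"
  by (rule finite_subset[of _ "Pow (Pos ` S \<union> Neg ` S)"]) (auto simp: nerve_def)

lemma nerve_elem_finite: "finite S \<Longrightarrow> G \<in> nerve w h X S \<Longrightarrow> finite G"
  by (rule finite_subset[of _ "Pos ` S \<union> Neg ` S"]) (auto simp: nerve_def)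

lemma nerve_insert:
  assumes "k \<notin> S"
  shows "nerve w h X (insert k S) = nerve w h X S \<union> insert (Pos k) ` nerve w h (reg w h X {Pos k}) S
           \<union> insert (Neg k) ` nerve w h (reg w h X {Neg k}) S"
proof (intro equalityI subsetI)
  fix G assume G: "G \<in> nerve w h X (insert k S)"
  then have Gs: "G \<subseteq> Pos ` insert k S \<union> Neg ` insert k S" and Gr: "reg w h X G \<noteq> {}"
    by (auto simp: nerve_def)
  have nc: "\<not> (Pos k \<in> G \<and> Neg k \<in> G)"
    using nerve_full[of w h X "insert k S"] G by (auto simp: full_polar_def)
  consider "Pos k \<in> G" | "Neg k \<in> G" | "Pos k \<notin> G" "Neg k \<notin> G" by blast
  then show "G \<in> nerve w h X S \<union> insert (Pos k) ` nerve w h (reg w h X {Pos k}) S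
           \<union> insert (Neg k) ` nerve w h (reg w h X {Neg k}) S"
  proof cases
    case 1
    have "G - {Pos k} \<in> nerve w h (reg w h X {Pos k}) S"
      unfolding nerve_def reg_reg using Gs Gr nc 1 by (auto simp: insert_absorb)
    moreover have "G = insert (Pos k) (G - {Pos k})" using 1 by auto
    ultimately show ?thesis by blast
  next
    case 2
    have "G - {Neg k} \<in> nerve w h (reg w h X {Neg k}) S"
      unfolding nerve_def reg_reg using Gs Gr nc 2 by (auto simp: insert_absorb)
    moreover have "G = insert (Neg k) (G - {Neg k})" using 2 by auto
    ultimately show ?thesis by blast
  next
    case 3
    then have "G \<in> nerve w h X S" using Gs Gr by (auto simp: nerve_def)
    then show ?thesis by blast
  qed
next
  fix G assume "G \<in> nerve w h X S \<union> insert (Pos k) ` nerve w h (reg w h X {Pos k}) S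
           \<union> insert (Neg k) ` nerve w h (reg w h X {Neg k}) S"
  then show "G \<in> nerve w h X (insert k S)"
    unfolding nerve_def reg_reg by auto
qed

lemma nerve_split:
  assumes op: "open X" and fin: "finite S" and wk: "w k \<noteq> 0"
  shows "nerve w h X S = nerve w h (reg w h X {Pos k}) S \<union> nerve w h (reg w h X {Neg k}) S"
proof (intro equalityI subsetI)
  fix G assume G: "G \<in> nerve w h X S"
  then obtain x where x: "x \<in> reg w h X G" by (auto simp: nerve_def)
  have U: "open (reg w h X G)" using open_reg[OF op nerve_elem_finite[OF fin G]] .
  have "\<exists>y\<in>reg w h X G. w k \<bullet> y \<noteq> h k"
  proof (cases "w k \<bullet> x = h k")
    case True
    obtain t where t: "t > 0" "x + t *\<^sub>R w k \<in> reg w h X G" using small_step[OF U x] by blast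
    have "w k \<bullet> (x + t *\<^sub>R w k) = h k + t * (w k \<bullet> w k)" using True by (simp add: inner_add_right)
    moreover have "t * (w k \<bullet> w k) > 0" using t wk by simp
    ultimately show ?thesis using t by (intro bexI[of _ "x + t *\<^sub>R w k"]) auto
  next
    case False then show ?thesis using x by blast
  qed
  then obtain y where y: "y \<in> reg w h X G" "w k \<bullet> y \<noteq> h k" by blast
  have "y \<in> reg w h (reg w h X {Pos k}) G \<or> y \<in> reg w h (reg w h X {Neg k}) G"
    using y unfolding reg_reg by (auto simp: reg_def lin_def)
  then show "G \<in> nerve w h (reg w h X {Pos k}) S \<union> nerve w h (reg w h X {Neg k}) S"
    using G by (auto simp: nerve_def)
next
  fix G assume "G \<in> nerve w h (reg w h X {Pos k}) S \<union> nerve w h (reg w h X {Neg k}) S"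
  then show "G \<in> nerve w h X S"
    unfolding nerve_def reg_reg using reg_anti[of G "{Pos k} \<union> G" w h X] reg_anti[of G "{Neg k} \<union> G" w h X]
    by auto
qed



lemma hyp_Inter: "p \<in> (\<Inter>i\<in>S. hyp w h i) \<longleftrightarrow> (\<forall>i\<in>S. w i \<bullet> p = h i)"
  by (auto simp: hyp_def)

lemma full_polar_insert:
  assumes "k \<notin> S"
  shows "full_polar (insert k S) = full_polar S \<union> insert (Pos k) ` full_polar S \<union> insert (Neg k) ` full_polar S"
proof (intro equalityI subsetI)
  fix G assume G: "G \<in> full_polar (insert k S)"
  then have Gs: "G \<subseteq> Pos ` insert k S \<union> Neg ` insert k S" and nc: "\<not> (\<exists>i. Pos i \<in> G \<and> Neg i \<in> G)"
    by (auto simp: full_polar_def)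
  consider "Pos k \<in> G" | "Neg k \<in> G" | "Pos k \<notin> G" "Neg k \<notin> G" by blast
  then show "G \<in> full_polar S \<union> insert (Pos k) ` full_polar S \<union> insert (Neg k) ` full_polar S"
  proof cases
    case 1
    have "G - {Pos k} \<in> full_polar S" using Gs nc 1 by (auto simp: full_polar_def)
    moreover have "G = insert (Pos k) (G - {Pos k})" using 1 by auto
    ultimately show ?thesis by blast
  next
    case 2
    have "G - {Neg k} \<in> full_polar S" using Gs nc 2 by (auto simp: full_polar_def)
    moreover have "G = insert (Neg k) (G - {Neg k})" using 2 by auto
    ultimately show ?thesis by blast
  next
    case 3
    then have "G \<in> full_polar S" using Gs nc by (auto simp: full_polar_def)
    then show ?thesis by blast
  qed
next
  fix G assume "G \<in> full_polar S \<union> insert (Pos k) ` full_polar S \<union> insert (Neg k) ` full_polar S"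
  then show "G \<in> full_polar (insert k S)"
    using assms by (auto simp: full_polar_def)
qed

lemma good:
  assumes "finite S"
  shows "open X \<Longrightarrow> convex X \<Longrightarrow> stab w h X S \<Longrightarrow>
    collapsible (nerve w h X S) \<or> (nerve w h X S = full_polar S \<and> X \<inter> (\<Inter>i\<in>S. hyp w h i) \<noteq> {})"
  using assms
proof (induction S arbitrary: X rule: finite_induct)
  case empty
  show ?case
  proof (cases "X = {}")
    case True
    then have "nerve w h X {} = {}" by (auto simp: nerve_def reg_def)
    then show ?thesis by (simp add: collapsible.void)
  next
    case False
    then have "nerve w h X {} = {{}}" by (auto simp: nerve_def reg_def)
    moreover have "full_polar {} = {{}}" by (auto simp: full_polar_def)
    ultimately show ?thesis using False by simp
  qed
next
  case (insert k S')
  define Xp where "Xp = reg w h X {Pos k}"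
  define Xn where "Xn = reg w h X {Neg k}"
  define A where "A = nerve w h Xp S'"
  define B where "B = nerve w h Xn S'"
  define D where "D = nerve w h X S'"
  define K where "K = nerve w h X (insert k S')"
  have opp: "open Xp" "open Xn" using insert.prems(1) by (auto simp: Xp_def Xn_def intro: open_reg)
  have cvp: "convex Xp" "convex Xn" using insert.prems(2) by (auto simp: Xp_def Xn_def intro: convex_reg)
  have stp: "stab w h Xp S'" "stab w h Xn S'" "stab w h X S'"
    unfolding Xp_def Xn_def
    by (rule stab_mono[OF insert.prems(3) subset_insertI reg_sub])+
       (rule stab_mono[OF insert.prems(3) subset_insertI order_refl])
  have wk: "w k \<noteq> 0" using insert.prems(3) by (simp add: stab_def)
  have IHA: "collapsible A \<or> (A = full_polar S' \<and> Xp \<inter> (\<Inter>i\<in>S'. hyp w h i) \<noteq> {})"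
    unfolding A_def using insert.IH opp cvp stp by blast
  have IHB: "collapsible B \<or> (B = full_polar S' \<and> Xn \<inter> (\<Inter>i\<in>S'. hyp w h i) \<noteq> {})"
    unfolding B_def using insert.IH opp cvp stp by blast
  have IHD: "collapsible D \<or> (D = full_polar S' \<and> X \<inter> (\<Inter>i\<in>S'. hyp w h i) \<noteq> {})"
    unfolding D_def using insert.IH insert.prems stp by blast
  have Kd: "K = D \<union> insert (Pos k) ` A \<union> insert (Neg k) ` B"
    unfolding K_def D_def A_def B_def Xp_def Xn_def using nerve_insert[OF insert.hyps(2)] by blast
  have DAB: "D = A \<union> B"
    unfolding D_def A_def B_def Xp_def Xn_def using nerve_split[of X S' w k h, OF insert.prems(1) insert.hyps(1) wk] .
  have DF: "D \<subseteq> full_polar S'" unfolding D_def by (rule nerve_full)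
  have finD: "finite D" unfolding D_def using insert.hyps(1) by (rule nerve_finite)
  have nD: "Pos k \<notin> \<rho> \<and> Neg k \<notin> \<rho>" if "\<rho> \<in> D" for \<rho>
    using that insert.hyps(2) by (auto simp: D_def nerve_def)
  have nA: "Pos k \<notin> \<rho> \<and> Neg k \<notin> \<rho>" if "\<rho> \<in> A" for \<rho> using nD DAB that by blast
  have nB: "Pos k \<notin> \<rho> \<and> Neg k \<notin> \<rho>" if "\<rho> \<in> B" for \<rho> using nD DAB that by blast
  have caseA: "collapsible K" if AF: "A = full_polar S'" and cB: "collapsible B"
  proof -
    have AD: "A = D" using AF DF DAB by blast
    have c1: "collapsible (D \<union> insert (Pos k) ` D)" using cone_coll[OF finD] nD by blast
    have "collapsible ((D \<union> insert (Pos k) ` D) \<union> insert (Neg k) ` B)"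
      by (rule lift_coll[OF cB]) (use nB nD c1 in auto)
    then show ?thesis using Kd AD by (simp add: Un_ac)
  qed
  have caseB: "collapsible K" if BF: "B = full_polar S'" and cA: "collapsible A"
  proof -
    have BD: "B = D" using BF DF DAB by blast
    have c1: "collapsible (D \<union> insert (Neg k) ` D)" using cone_coll[OF finD] nD by blast
    have "collapsible ((D \<union> insert (Neg k) ` D) \<union> insert (Pos k) ` A)"
      by (rule lift_coll[OF cA]) (use nA nD c1 in auto)
    then show ?thesis using Kd BD by (simp add: Un_ac)
  qed
  have caseC: "collapsible K" if cA: "collapsible A" and cB: "collapsible B" and cD: "collapsible D"
  proof -
    have c1: "collapsible (D \<union> insert (Neg k) ` B)"
      by (rule lift_coll[OF cB]) (use nB nD cD in auto)
    have "collapsible ((D \<union> insert (Neg k) ` B) \<union> insert (Pos k) ` A)"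
      by (rule lift_coll[OF cA]) (use nA nD nB c1 in auto)
    then show ?thesis using Kd by (simp add: Un_ac)
  qed
  have fullK: "K = full_polar (insert k S')" if AF: "A = full_polar S'" and BF: "B = full_polar S'"
  proof -
    have "D = full_polar S'" using AF DF DAB by blast
    then have "K = full_polar S' \<union> insert (Pos k) ` full_polar S' \<union> insert (Neg k) ` full_polar S'"
      using Kd AF BF by simp
    also have "\<dots> = full_polar (insert k S')"
      using full_polar_insert[OF insert.hyps(2)] by simp
    finally show ?thesis .
  qed
  have ptK: "X \<inter> (\<Inter>i\<in>insert k S'. hyp w h i) \<noteq> {}"
    if P: "Xp \<inter> (\<Inter>i\<in>S'. hyp w h i) \<noteq> {}" and Q: "Xn \<inter> (\<Inter>i\<in>S'. hyp w h i) \<noteq> {}"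
  proof -
    obtain p where p: "p \<in> Xp" "\<forall>i\<in>S'. w i \<bullet> p = h i" using P hyp_Inter by blast
    obtain q where q: "q \<in> Xn" "\<forall>i\<in>S'. w i \<bullet> q = h i" using Q hyp_Inter by blast
    have pX: "p \<in> X" and pk: "w k \<bullet> p > h k" using p(1) by (auto simp: Xp_def reg_def lin_def)
    have qX: "q \<in> X" and qk: "w k \<bullet> q < h k" using q(1) by (auto simp: Xn_def reg_def lin_def)
    define a where "a = w k \<bullet> p"
    define b where "b = w k \<bullet> q"
    define t where "t = (a - h k) / (a - b)"
    have ab: "a - b > 0" using pk qk by (simp add: a_def b_def)
    have t0: "0 \<le> t" "0 \<le> 1 - t" using ab pk qk by (auto simp: t_def a_def b_def field_simps)
    define z where "z = (1 - t) *\<^sub>R p + t *\<^sub>R q"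
    have zX: "z \<in> X" unfolding z_def using convexD[OF insert.prems(2) pX qX t0(2) t0(1)] by simp
    have zS: "w i \<bullet> z = h i" if "i \<in> S'" for i
      using p(2) q(2) that by (simp add: z_def inner_add_right algebra_simps)
    have "w k \<bullet> z = (1 - t) * a + t * b" by (simp add: z_def inner_add_right a_def b_def)
    also have "\<dots> = a - t * (a - b)" by (simp add: algebra_simps)
    also have "\<dots> = h k" using ab by (simp add: t_def)
    finally have "w k \<bullet> z = h k" .
    then have "z \<in> X \<inter> (\<Inter>i\<in>insert k S'. hyp w h i)" using zX zS by (auto simp: hyp_def)
    then show ?thesis by blast
  qed
  have Dfull: "collapsible K \<or> (K = full_polar (insert k S') \<and> X \<inter> (\<Inter>i\<in>insert k S'. hyp w h i) \<noteq> {})"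
    if cA: "collapsible A" and cB: "collapsible B" and P: "X \<inter> (\<Inter>i\<in>S'. hyp w h i) \<noteq> {}"
  proof -
    obtain p where p: "p \<in> X" "\<forall>i\<in>S'. w i \<bullet> p = h i" using P hyp_Inter by blast
    consider "w k \<bullet> p > h k" | "w k \<bullet> p < h k" | "w k \<bullet> p = h k" by linarith
    then show ?thesis
    proof cases
      case 1
      then have "p \<in> Xp" using p by (auto simp: Xp_def reg_def lin_def)
      then have "A = full_polar S'" unfolding A_def using ball_full[OF opp(1) insert.hyps(1) stp(1) _ p(2)] by blast
      then show ?thesis using caseA cB by blast
    next
      case 2
      then have "p \<in> Xn" using p by (auto simp: Xn_def reg_def lin_def)
      then have "B = full_polar S'" unfolding B_def using ball_full[OF opp(2) insert.hyps(1) stp(2) _ p(2)] by blast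
      then show ?thesis using caseB cA by blast
    next
      case 3
      then have ph: "\<forall>i\<in>insert k S'. w i \<bullet> p = h i" using p by auto
      have "K = full_polar (insert k S')"
        unfolding K_def using ball_full[OF insert.prems(1) _ insert.prems(3) p(1) ph] insert.hyps(1) by blast
      moreover have "p \<in> X \<inter> (\<Inter>i\<in>insert k S'. hyp w h i)" using p(1) ph hyp_Inter by blast
      ultimately show ?thesis by blast
    qed
  qed
  have "collapsible K \<or> (K = full_polar (insert k S') \<and> X \<inter> (\<Inter>i\<in>insert k S'. hyp w h i) \<noteq> {})"
    using IHA IHB IHD caseA caseB caseC fullK ptK Dfull by blast
  then show ?case unfolding K_def .
qed



lemma closed_open:
  assumes st: "stab w h X {1..n}" and op: "open X"
    and Fs: "F \<subseteq> Pos ` {1..n} \<union> Neg ` {1..n}" and xX: "x \<in> X"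
    and xp: "\<forall>i. Pos i \<in> F \<longrightarrow> w i \<bullet> x - h i > 0"
    and xn: "\<forall>j. Neg j \<in> F \<longrightarrow> w j \<bullet> x - h j \<le> 0"
  shows "reg w h X F \<noteq> {}"
proof -
  define \<tau> where "\<tau> = {j\<in>{1..n}. Neg j \<in> F \<and> w j \<bullet> x = h j}"
  have fin\<tau>: "finite \<tau>" by (simp add: \<tau>_def)
  have ts: "\<tau> \<subseteq> {1..n}" by (auto simp: \<tau>_def)
  have th: "\<forall>i\<in>\<tau>. w i \<bullet> x = h i" by (simp add: \<tau>_def)
  obtain v where v: "\<forall>j\<in>\<tau>. w j \<bullet> v = -1"
    using sign_vec[OF st fin\<tau> ts xX th, of "\<lambda>_. -1"] by blast
  define F0 where "F0 = F - Neg ` \<tau>"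
  have finF: "finite F" using Fs by (rule finite_subset) auto
  have U: "open (reg w h X F0)" using open_reg[OF op] finF by (simp add: F0_def)
  have xU: "x \<in> reg w h X F0"
    unfolding reg_def
  proof (intro CollectI conjI ballI xX)
    fix u assume u: "u \<in> F0"
    show "0 < lin w h u x"
    proof (cases u)
      case (Pos i)
      then have "Pos i \<in> F" using u by (simp add: F0_def)
      then show ?thesis using xp Pos by (simp add: lin_def)
    next
      case (Neg j)
      have uF: "Neg j \<in> F" "Neg j \<notin> Neg ` \<tau>" using u Neg by (auto simp: F0_def)
      have "j \<in> {1..n}" using uF(1) Fs by auto
      then have "w j \<bullet> x \<noteq> h j" using uF by (auto simp: \<tau>_def)
      moreover have "w j \<bullet> x - h j \<le> 0" using xn uF(1) by blast
      ultimately show ?thesis using Neg by (simp add: lin_def)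
    qed
  qed
  obtain t where t: "t > 0" "x + t *\<^sub>R v \<in> reg w h X F0" using small_step[OF U xU] by blast
  have "x + t *\<^sub>R v \<in> reg w h X F"
    unfolding reg_def
  proof (intro CollectI conjI ballI)
    show "x + t *\<^sub>R v \<in> X" using t(2) by (simp add: reg_def)
    fix u assume u: "u \<in> F"
    show "0 < lin w h u (x + t *\<^sub>R v)"
    proof (cases "u \<in> F0")
      case True then show ?thesis using t(2) by (simp add: reg_def)
    next
      case False
      then obtain j where j: "j \<in> \<tau>" "u = Neg j" using u by (auto simp: F0_def)
      then have "w j \<bullet> x = h j" by (simp add: \<tau>_def)
      then show ?thesis using j v t(1) by (simp add: lin_def inner_add_right)
    qed
  qed
  then show ?thesis by blast
qed



lemma gamma_eq:
  assumes st: "stab w h X {1..n}" and op: "open X"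
  shows "polar_complex n (hcode n w h X) = nerve w h X {1..n}"
proof (intro equalityI subsetI)
  fix F assume "F \<in> polar_complex n (hcode n w h X)"
  then obtain \<sigma> x where \<sigma>: "\<sigma> \<subseteq> {1..n}" "F \<subseteq> Sig n \<sigma>" and x: "x \<in> atom n w h X \<sigma>"
    by (auto simp: polar_complex_def hcode_def)
  have Fs: "F \<subseteq> Pos ` {1..n} \<union> Neg ` {1..n}" using \<sigma> unfolding Sig_def by blast
  have xX: "x \<in> X" using x by (simp add: atom_def)
  have xp: "\<forall>i. Pos i \<in> F \<longrightarrow> w i \<bullet> x - h i > 0"
    using \<sigma>(2) x by (auto simp: Sig_def atom_def hyp_pos_def)
  have xn: "\<forall>j. Neg j \<in> F \<longrightarrow> w j \<bullet> x - h j \<le> 0"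
  proof (intro allI impI)
    fix j assume "Neg j \<in> F"
    then have "j \<in> {1..n} - \<sigma>" using \<sigma>(2) by (auto simp: Sig_def)
    then have "x \<notin> hyp_pos w h j" using x by (simp add: atom_def)
    then show "w j \<bullet> x - h j \<le> 0" by (simp add: hyp_pos_def)
  qed
  show "F \<in> nerve w h X {1..n}" using closed_open[OF st op Fs xX xp xn] Fs by (simp add: nerve_def)
next
  fix F assume F: "F \<in> nerve w h X {1..n}"
  then obtain x where Fs: "F \<subseteq> Pos ` {1..n} \<union> Neg ` {1..n}" and x: "x \<in> reg w h X F"
    by (auto simp: nerve_def)
  define \<sigma> where "\<sigma> = {i\<in>{1..n}. w i \<bullet> x - h i > 0}"
  have "x \<in> atom n w h X \<sigma>" using x by (auto simp: atom_def \<sigma>_def hyp_pos_def reg_def)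
  then have "\<sigma> \<in> hcode n w h X" by (auto simp: hcode_def \<sigma>_def)
  moreover have "F \<subseteq> Sig n \<sigma>"
  proof
    fix u assume u: "u \<in> F"
    then have l: "0 < lin w h u x" using x by (simp add: reg_def)
    show "u \<in> Sig n \<sigma>"
    proof (cases u)
      case (Pos i) then show ?thesis using u Fs l by (auto simp: Sig_def \<sigma>_def lin_def)
    next
      case (Neg j) then show ?thesis using u Fs l by (auto simp: Sig_def \<sigma>_def lin_def)
    qed
  qed
  ultimately show "F \<in> polar_complex n (hcode n w h X)" by (auto simp: polar_complex_def)
qed

lemma link_eq:
  assumes F: "F \<in> nerve w h X S"
  shows "link F (nerve w h X S) = nerve w h (reg w h X F) (S - supp F)"
proof (intro equalityI subsetI)
  fix \<nu> assume "\<nu> \<in> link F (nerve w h X S)"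
  then have \<nu>: "\<nu> \<in> nerve w h X S" "\<nu> \<inter> F = {}" "\<nu> \<union> F \<in> nerve w h X S" by (auto simp: link_def)
  have nc: "\<not> (Pos i \<in> \<nu> \<union> F \<and> Neg i \<in> \<nu> \<union> F)" for i
    using nerve_full[of w h X S] \<nu>(3) by (auto simp: full_polar_def)
  have "\<nu> \<subseteq> Pos ` (S - supp F) \<union> Neg ` (S - supp F)"
  proof
    fix u assume u: "u \<in> \<nu>"
    have uS: "u \<in> Pos ` S \<union> Neg ` S" using u \<nu>(1) by (auto simp: nerve_def)
    show "u \<in> Pos ` (S - supp F) \<union> Neg ` (S - supp F)"
    proof (cases u)
      case (Pos i)
      then have "Pos i \<notin> F" "Neg i \<notin> F" using u \<nu>(2) nc[of i] by auto
      then show ?thesis using Pos uS by (auto simp: supp_def pos_part_def neg_part_def)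
    next
      case (Neg i)
      then have "Pos i \<notin> F" "Neg i \<notin> F" using u \<nu>(2) nc[of i] by auto
      then show ?thesis using Neg uS by (auto simp: supp_def pos_part_def neg_part_def)
    qed
  qed
  moreover have "reg w h (reg w h X F) \<nu> \<noteq> {}" using \<nu>(3) unfolding reg_reg
    by (simp add: nerve_def Un_commute)
  ultimately show "\<nu> \<in> nerve w h (reg w h X F) (S - supp F)" by (simp add: nerve_def)
next
  fix \<nu> assume "\<nu> \<in> nerve w h (reg w h X F) (S - supp F)"
  then have \<nu>: "\<nu> \<subseteq> Pos ` (S - supp F) \<union> Neg ` (S - supp F)" "reg w h X (F \<union> \<nu>) \<noteq> {}"
    by (auto simp: nerve_def reg_reg)
  have Fs: "F \<subseteq> Pos ` S \<union> Neg ` S" using F by (simp add: nerve_def)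
  have "reg w h X \<nu> \<noteq> {}" using \<nu>(2) reg_anti[of \<nu> "F \<union> \<nu>" w h X] by blast
  moreover have "\<nu> \<inter> F = {}"
  proof -
    have "u \<notin> F" if "u \<in> \<nu>" for u
      using \<nu>(1) that by (cases u) (auto simp: supp_def pos_part_def neg_part_def)
    then show ?thesis by blast
  qed
  moreover have "\<nu> \<union> F \<in> nerve w h X S" using \<nu> Fs by (auto simp: nerve_def Un_commute)
  ultimately show "\<nu> \<in> link F (nerve w h X S)" using \<nu>(1) by (auto simp: link_def nerve_def)
qed

theorem theoremB:
  fixes n :: nat and w :: "nat \<Rightarrow> 'a::euclidean_space" and h :: "nat \<Rightarrow> real" and X :: "'a set"
  assumes "stable_pair n w h X"
  shows "\<forall>F \<in> polar_complex n (hcode n w h X).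
           \<not> facet (polar_complex n (hcode n w h X)) F \<longrightarrow>
             collapsible (link F (polar_complex n (hcode n w h X))) \<or>
             link F (polar_complex n (hcode n w h X)) = full_polar ({1..n} - supp F)"
proof (intro ballI impI)
  fix F assume F0: "F \<in> polar_complex n (hcode n w h X)"
  have st: "stab w h X {1..n}" and op: "open X" and cv: "convex X"
    using assms by (auto simp: stable_pair_def stab_def)
  have G: "polar_complex n (hcode n w h X) = nerve w h X {1..n}" by (rule gamma_eq[OF st op])
  have F: "F \<in> nerve w h X {1..n}" using F0 G by simp
  have finF: "finite F" by (rule nerve_elem_finite[OF _ F]) simp
  have L: "link F (polar_complex n (hcode n w h X)) = nerve w h (reg w h X F) ({1..n} - supp F)"
    using G link_eq[OF F] by simp
  have "collapsible (nerve w h (reg w h X F) ({1..n} - supp F)) \<or>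
        nerve w h (reg w h X F) ({1..n} - supp F) = full_polar ({1..n} - supp F)"
    using good[of "{1..n} - supp F" "reg w h X F" w h] open_reg[OF op finF] convex_reg[OF cv]
      stab_mono[OF st Diff_subset reg_sub] by blast
  then show "collapsible (link F (polar_complex n (hcode n w h X))) \<or>
             link F (polar_complex n (hcode n w h X)) = full_polar ({1..n} - supp F)"
    using L by simp
qed


end
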